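(* Let $a,c>0$ and $b,d<0$ be real numbers with $x_A=x_B$, and let $W_0(z)=1$, $W_1(z)=z$, $W_n(z)=(az+b)W_{n-1}(z)+(cz+d)W_{n-2}(z)$ for $n\ge2$. Then for every $n\ge0$ the function $U_n(z)=W_n(z)/A(z)^{\lfloor n/2\rfloor}$ is a polynomial (of degree $\lceil n/2\rceil$), all of whose zeros are real and lie in the open interval $(u,x_B)$. Moreover, this interval is sharp: both $u$ and $x_B$ are limits of zeros of the polynomials $U_n(z)$.
   Context: Notation: $A(z)=az+b$, $B(z)=cz+d$, $x_A=-b/a$, $x_B=-d/c$, $\Delta_\Delta=c^2-a^2B(x_A)$, $x_\Delta^\pm=x_A+\frac{-2c\pm2\sqrt{\Delta_\Delta}}{a^2}$, $g(z)=(1-a)z^2-(b+c)z-d$, $\Delta_g=(b+c)^2+4d(1-a)$, $F=\Delta_g-\Delta_\Delta=d(a-2)^2+bc(2-a)+b^2$. The zeros of $g$ are $x_g^\pm=\frac{b+c}{2(1-a)}\pm\frac{\sqrt{\Delta_g}}{2|1-a|}$ if $a\neq1$, and $x_g^\pm=-d/(b+c)$ if $a=1$ and $b+c\ne0$. Define $u=x_\Delta^-$ if $a<2$ and $F\le0$; $u=x_g^+$ if $a<1$ and $F>0$; $u=x_g^-$ otherwise. A number $z^*$ is a limit of zeros of $\{U_n\}$ if there exist zeros $z_n$ of $U_n$ with $z_n\to z^*$. *)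

theory Defs
  imports "HOL-Analysis.Analysis" "HOL-Computational_Algebra.Polynomial"
begin

fun Wpoly :: "real \<Rightarrow> real \<Rightarrow> real \<Rightarrow> real \<Rightarrow> nat \<Rightarrow> complex poly" where
  "Wpoly a b c d 0 = 1"
| "Wpoly a b c d (Suc 0) = [:0, 1:]"
| "Wpoly a b c d (Suc (Suc n)) =
     [:complex_of_real b, complex_of_real a:] * Wpoly a b c d (Suc n)
   + [:complex_of_real d, complex_of_real c:] * Wpoly a b c d n"

definition Apoly :: "real \<Rightarrow> real \<Rightarrow> complex poly" where
  "Apoly a b = [:complex_of_real b, complex_of_real a:]"

definition Upoly :: "real \<Rightarrow> real \<Rightarrow> real \<Rightarrow> real \<Rightarrow> nat \<Rightarrow> complex poly" where
  "Upoly a b c d n = Wpoly a b c d n div (Apoly a b) ^ (n div 2)"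

definition xA :: "real \<Rightarrow> real \<Rightarrow> real" where "xA a b = - b / a"
definition xB :: "real \<Rightarrow> real \<Rightarrow> real" where "xB c d = - d / c"

definition DeltaDelta :: "real \<Rightarrow> real \<Rightarrow> real \<Rightarrow> real \<Rightarrow> real" where
  "DeltaDelta a b c d = c^2 - a^2 * (c * xA a b + d)"

definition xDelta_minus :: "real \<Rightarrow> real \<Rightarrow> real \<Rightarrow> real \<Rightarrow> real" where
  "xDelta_minus a b c d = xA a b + (- 2 * c - 2 * sqrt (DeltaDelta a b c d)) / a^2"

definition Delta_g :: "real \<Rightarrow> real \<Rightarrow> real \<Rightarrow> real \<Rightarrow> real" where
  "Delta_g a b c d = (b + c)^2 + 4 * d * (1 - a)"

definition Fval :: "real \<Rightarrow> real \<Rightarrow> real \<Rightarrow> real \<Rightarrow> real" where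
  "Fval a b c d = d * (a - 2)^2 + b * c * (2 - a) + b^2"

text \<open>Zeros of g(z) = (1-a)z^2 - (b+c)z - d. (When a = 1 and b + c = 0 the
  value is irrelevant for u.)\<close>
definition xg_plus :: "real \<Rightarrow> real \<Rightarrow> real \<Rightarrow> real \<Rightarrow> real" where
  "xg_plus a b c d = (if a \<noteq> 1
     then (b + c) / (2 * (1 - a)) + sqrt (Delta_g a b c d) / (2 * \<bar>1 - a\<bar>)
     else - d / (b + c))"

definition xg_minus :: "real \<Rightarrow> real \<Rightarrow> real \<Rightarrow> real \<Rightarrow> real" where
  "xg_minus a b c d = (if a \<noteq> 1
     then (b + c) / (2 * (1 - a)) - sqrt (Delta_g a b c d) / (2 * \<bar>1 - a\<bar>)
     else - d / (b + c))"

definition uval :: "real \<Rightarrow> real \<Rightarrow> real \<Rightarrow> real \<Rightarrow> real" where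
  "uval a b c d =
     (if a < 2 \<and> Fval a b c d \<le> 0 then xDelta_minus a b c d
      else if a < 1 \<and> Fval a b c d > 0 then xg_plus a b c d
      else xg_minus a b c d)"

definition limit_of_zeros :: "(nat \<Rightarrow> complex poly) \<Rightarrow> complex \<Rightarrow> bool" where
  "limit_of_zeros U w \<longleftrightarrow>
     (\<exists>z :: nat \<Rightarrow> complex. (\<forall>n\<ge>1. poly (U n) (z n) = 0) \<and> z \<longlonglongrightarrow> w)"

end

theory Submission
  imports Defs
begin

locale setting =
  fixes a b k :: real
  assumes a_pos: "a > 0" and b_neg: "b < 0" and k_pos: "k > 0"
begin

fun U :: "nat \<Rightarrow> real poly" where
  "U 0 = 1"
| "U (Suc 0) = [:0, 1:]"
| "U (Suc (Suc n)) = (if even n then U (Suc n) else [:b, a:] * U (Suc n)) + smult k (U n)"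

fun Uc :: "nat \<Rightarrow> complex poly" where
  "Uc 0 = 1"
| "Uc (Suc 0) = [:0, 1:]"
| "Uc (Suc (Suc n)) = (if even n then Uc (Suc n) else [:of_real b, of_real a:] * Uc (Suc n))
      + smult (of_real k) (Uc n)"

definition x0 :: real where "x0 = - b / a"

lemma x0_pos: "x0 > 0" using a_pos b_neg divide_pos_pos[of "-b" a] by (simp add: x0_def)

lemma A_x0: "a * x0 + b = 0" using a_pos by (simp add: x0_def)

lemma poly_U_SS: "poly (U (Suc (Suc n))) y =
   (if even n then 1 else a * y + b) * poly (U (Suc n)) y + k * poly (U n) y"
  by (simp add: algebra_simps)

lemma poly_Uc_real: "poly (Uc n) (of_real x) = of_real (poly (U n) x)"
  by (induction n rule: U.induct) (auto simp: algebra_simps)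

lemma degree_U: "degree (U n) \<le> (n + 1) div 2"
proof (induction n rule: U.induct)
  case 1 then show ?case by simp
next
  case 2 then show ?case by simp
next
  case (3 n)
  show ?case
  proof (cases "even n")
    case True
    have "degree (U (Suc (Suc n))) \<le> max (degree (U (Suc n))) (degree (smult k (U n)))"
      using True by (simp add: degree_add_le)
    also have "\<dots> \<le> (Suc (Suc n) + 1) div 2" using 3 True by auto
    finally show ?thesis .
  next
    case False
    have "degree ([:b, a:] * U (Suc n)) \<le> degree [:b,a:] + degree (U (Suc n))"
      by (rule degree_mult_le)
    also have "\<dots> \<le> 1 + (Suc n + 1) div 2" using 3 False a_pos by simp
    finally have h: "degree ([:b, a:] * U (Suc n)) \<le> 1 + (Suc n + 1) div 2" .
    have "degree (U (Suc (Suc n))) \<le> max (degree ([:b, a:] * U (Suc n))) (degree (smult k (U n)))"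
      using False by (simp add: degree_add_le)
    also have "\<dots> \<le> (Suc (Suc n) + 1) div 2" using h 3 False by auto
    finally show ?thesis .
  qed
qed

lemma degree_Uc: "degree (Uc n) \<le> (n + 1) div 2"
proof (induction n rule: Uc.induct)
  case 1 then show ?case by simp
next
  case 2 then show ?case by simp
next
  case (3 n)
  show ?case
  proof (cases "even n")
    case True
    have "degree (Uc (Suc (Suc n))) \<le> max (degree (Uc (Suc n))) (degree (smult (of_real k) (Uc n)))"
      using True by (simp add: degree_add_le)
    also have "\<dots> \<le> (Suc (Suc n) + 1) div 2" using 3 True by auto
    finally show ?thesis .
  next
    case False
    have "degree ([:of_real b, of_real a:] * Uc (Suc n)) \<le> degree [:of_real b::complex, of_real a:] + degree (Uc (Suc n))"
      by (rule degree_mult_le)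
    also have "\<dots> \<le> 1 + (Suc n + 1) div 2" using 3 False a_pos by simp
    finally have h: "degree ([:of_real b, of_real a:] * Uc (Suc n)) \<le> 1 + (Suc n + 1) div 2" .
    have "degree (Uc (Suc (Suc n))) \<le> max (degree ([:of_real b, of_real a:] * Uc (Suc n))) (degree (smult (of_real k) (Uc n)))"
      using False by (simp add: degree_add_le)
    also have "\<dots> \<le> (Suc (Suc n) + 1) div 2" using h 3 False by auto
    finally show ?thesis .
  qed
qed

lemma U_x0_pos: "poly (U n) x0 > 0"
proof -
  have "poly (U n) x0 > 0 \<and> poly (U (Suc n)) x0 > 0" for n
  proof (induction n)
    case 0 then show ?case using x0_pos by simp
  next
    case (Suc n)
    then show ?case using k_pos A_x0
      by (auto simp: poly_U_SS simp del: U.simps intro!: add_pos_pos mult_pos_pos)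
  qed
  then show ?thesis by blast
qed

end

lemma poly_same_sign:
  fixes p :: "real poly"
  assumes "x \<le> y" and "\<And>z. x \<le> z \<Longrightarrow> z \<le> y \<Longrightarrow> poly p z \<noteq> 0"
  shows "poly p x * poly p y > 0"
proof (rule ccontr)
  assume neg: "\<not> poly p x * poly p y > 0"
  have nx: "poly p x \<noteq> 0" and ny: "poly p y \<noteq> 0" using assms by auto
  show False
  proof (cases "x = y")
    case True then show ?thesis using neg nx by simp
  next
    case False
    then have "x < y" using assms by simp
    moreover have "poly p x * poly p y < 0" using neg nx ny
      by (simp add: not_less order.order_iff_strict)
    ultimately obtain z where "x < z" "z < y" "poly p z = 0" using poly_IVT by blast
    then show False using assms by auto
  qed
qed

lemma sign_transfer:
  fixes s v1 v2 :: real
  assumes "v1 * v2 > 0" "s * v1 > 0" shows "s * v2 > 0"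
proof -
  have "(s * v1) * (v1 * v2) > 0" using assms by simp
  then have "(s * v2) * (v1 * v1) > 0" by (simp add: algebra_simps)
  then show ?thesis by (simp add: zero_less_mult_iff)
qed

lemma roots_exhaust:
  fixes p :: "'a::{comm_ring_1,ring_no_zero_divisors} poly"
  assumes "p \<noteq> 0" "degree p \<le> m" "inj_on q {..<m}" "\<And>i. i < m \<Longrightarrow> poly p (q i) = 0"
    and "poly p x = 0"
  shows "\<exists>i<m. x = q i"
proof (rule ccontr)
  assume nx: "\<not> (\<exists>i<m. x = q i)"
  have sub: "insert x (q ` {..<m}) \<subseteq> {x. poly p x = 0}" using assms by auto
  have "Suc m = card (insert x (q ` {..<m}))"
    using nx assms(3) by (subst card_insert_disjoint) (auto simp: card_image)
  also have "\<dots> \<le> card {x. poly p x = 0}"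
    using card_mono[OF poly_roots_finite[OF assms(1)] sub] .
  also have "\<dots> \<le> degree p" using card_poly_roots_bound[OF assms(1)] .
  finally show False using assms(2) by simp
qed

lemma mono_from_suc:
  fixes t :: "nat \<Rightarrow> real"
  assumes "\<And>j. Suc j < n \<Longrightarrow> t j < t (Suc j)" "i < j" "j < n"
  shows "t i < t j"
  using assms(2,3)
proof (induction j)
  case 0 then show ?case by simp
next
  case (Suc j)
  then show ?case using assms(1)[of j]
    by (cases "i = j") (auto intro: less_trans)
qed

lemma mono_reflect:
  fixes t :: "nat \<Rightarrow> real"
  assumes "\<And>j. Suc j < n \<Longrightarrow> t j < t (Suc j)" "i < n" "j < n" "t i < t j"
  shows "i < j"
proof (rule ccontr)
  assume "\<not> i < j"
  then have "j < i \<or> j = i" by auto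
  then show False using mono_from_suc[of n t j i] assms by auto
qed

context setting
begin

lemma poly_U_step:
  assumes "n \<ge> 1"
  shows "poly (U (Suc n)) y = (if odd n then 1 else a * y + b) * poly (U n) y + k * poly (U (n - 1)) y"
proof -
  obtain m where n: "n = Suc m" using assms by (cases n) auto
  show ?thesis unfolding n using poly_U_SS[of m y] by simp
qed

end

locale zsetting = setting +
  fixes u :: real
  assumes u_lt: "u < x0"
    and E2: "\<And>n. (-1::real) ^ ((n + 1) div 2) * poly (U n) u > 0"
begin

lemma u_neg: "u < 0"
  using E2[of 1] by simp

definition inv :: "nat \<Rightarrow> (nat \<Rightarrow> real) \<Rightarrow> bool" where
  "inv n t \<longleftrightarrow> (\<forall>j<n. u < t j \<and> t j < x0) \<and> (\<forall>j. Suc j < n \<longrightarrow> t j < t (Suc j)) \<and>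
     (\<forall>j<n. even j \<longrightarrow> poly (U n) (t j) = 0 \<and> (-1::real) ^ ((n - j) div 2) * poly (U (n - 1)) (t j) > 0) \<and>
     (\<forall>j<n. odd j \<longrightarrow> poly (U (n - 1)) (t j) = 0 \<and> (-1::real) ^ ((n - j) div 2) * poly (U n) (t j) > 0) \<and>
     (\<forall>x. poly (U n) x = 0 \<longrightarrow> (\<exists>j<n. even j \<and> x = t j)) \<and>
     (\<forall>x. poly (U (n - 1)) x = 0 \<longrightarrow> (\<exists>j<n. odd j \<and> x = t j))"

lemma inv_1: "inv 1 (\<lambda>_. 0)"
  unfolding inv_def using u_neg x0_pos by auto

end

context zsetting
begin

lemma inv_step:
  assumes n1: "n \<ge> 1" and I: "inv n t"
  shows "\<exists>t'. inv (Suc n) t'"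
proof -
  from I have rng: "\<And>j. j < n \<Longrightarrow> u < t j \<and> t j < x0"
    and cons: "\<And>j. Suc j < n \<Longrightarrow> t j < t (Suc j)"
    and ev: "\<And>j. j < n \<Longrightarrow> even j \<Longrightarrow> poly (U n) (t j) = 0 \<and> (-1::real) ^ ((n - j) div 2) * poly (U (n - 1)) (t j) > 0"
    and od: "\<And>j. j < n \<Longrightarrow> odd j \<Longrightarrow> poly (U (n - 1)) (t j) = 0 \<and> (-1::real) ^ ((n - j) div 2) * poly (U n) (t j) > 0"
    and exh: "\<And>x. poly (U n) x = 0 \<Longrightarrow> \<exists>j<n. even j \<and> x = t j"
    and exh': "\<And>x. poly (U (n - 1)) x = 0 \<Longrightarrow> \<exists>j<n. odd j \<and> x = t j"
    unfolding inv_def by blast+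
  have mono: "\<And>i j. i < j \<Longrightarrow> j < n \<Longrightarrow> t i < t j" using mono_from_suc[of n t] cons by blast
  have refl: "\<And>i j. i < n \<Longrightarrow> j < n \<Longrightarrow> t i < t j \<Longrightarrow> i < j" using mono_reflect[of n t] cons by blast
  define F where "F = U (Suc n)"
  define d' where "d' = (n + 2) div 2"
  define lo where "lo i = (if i = 0 then u else t (2 * i - 2))" for i
  define hi where "hi i = (if 2 * i < n then t (2 * i) else x0)" for i
  have Ft: "(-1::real) ^ ((n - j) div 2) * poly F (t j) > 0" if "j < n" "even j" for j
  proof -
    have "poly F (t j) = k * poly (U (n - 1)) (t j)"
      using ev[OF that] poly_U_step[OF n1, of "t j"] by (simp add: F_def)
    then show ?thesis using ev[OF that] k_pos
      by (simp add: mult.left_commute)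
  qed
  have d'_le: "2 * i \<le> n" if "i < d'" for i using that unfolding d'_def by linarith
  have lo_sign: "(-1::real) ^ (d' - i) * poly F (lo i) > 0" if "i < d'" for i
  proof (cases "i = 0")
    case True
    then show ?thesis using E2[of "Suc n"] by (simp add: lo_def F_def d'_def)
  next
    case False
    have j: "2 * i - 2 < n" "even (2 * i - 2)" using d'_le[OF that] False n1 by auto
    have e: "(n - (2 * i - 2)) div 2 = d' - i" using d'_le[OF that] False unfolding d'_def by linarith
    show ?thesis using Ft[OF j] False e by (simp add: lo_def)
  qed
  have hi_sign: "(-1::real) ^ (d' - i - 1) * poly F (hi i) > 0" if "i < d'" for i
  proof (cases "2 * i < n")
    case True
    have e: "(n - 2 * i) div 2 = d' - i - 1" using True unfolding d'_def by linarith
    show ?thesis using Ft[OF True] True e by (simp add: hi_def)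
  next
    case False
    then have "d' - i - 1 = 0" using d'_le[OF that] unfolding d'_def by linarith
    then show ?thesis using False U_x0_pos by (simp add: hi_def F_def)
  qed
  have lohi: "lo i < hi i" if "i < d'" for i
  proof -
    have "u < t 0" using rng n1 by auto
    moreover have "0 < i \<Longrightarrow> 2 * i < n \<Longrightarrow> t (2 * i - 2) < t (2 * i)" by (rule mono) auto
    moreover have "0 < i \<Longrightarrow> t (2 * i - 2) < x0" using rng[of "2 * i - 2"] d'_le[OF that] by auto
    ultimately show ?thesis using u_lt n1 by (auto simp: lo_def hi_def)
  qed
  have lo_ge: "u \<le> lo i" if "i < d'" for i
  proof -
    have "i \<noteq> 0 \<Longrightarrow> 2 * i - 2 < n" using d'_le[OF that] n1 by arith
    then show ?thesis using rng[of "2 * i - 2"] by (auto simp: lo_def less_imp_le)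
  qed
  have hi_le: "hi i \<le> x0" for i using rng[of "2 * i"] by (auto simp: hi_def)
  have exq: "\<exists>q. lo i < q \<and> q < hi i \<and> poly F q = 0" if "i < d'" for i
  proof -
    define \<sigma> where "\<sigma> = (-1::real) ^ (d' - i - 1)"
    have e: "d' - i = Suc (d' - i - 1)" using that by simp
    have s: "(-1::real) ^ (d' - i) = - \<sigma>" unfolding \<sigma>_def by (subst e) simp
    have ss: "\<sigma> * \<sigma> = 1" unfolding \<sigma>_def by (simp flip: power_add)
    have "(- \<sigma> * poly F (lo i)) * (\<sigma> * poly F (hi i)) > 0"
      using lo_sign[OF that] hi_sign[OF that] unfolding s \<sigma>_def by (rule mult_pos_pos)
    also have "(- \<sigma> * poly F (lo i)) * (\<sigma> * poly F (hi i)) = - (\<sigma> * \<sigma>) * (poly F (lo i) * poly F (hi i))"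
      by (simp add: algebra_simps)
    finally have "poly F (lo i) * poly F (hi i) < 0" unfolding ss by simp
    then show ?thesis using poly_IVT[OF lohi[OF that]] by blast
  qed
  define q where "q i = (SOME q. lo i < q \<and> q < hi i \<and> poly F q = 0)" for i
  have q: "lo i < q i \<and> q i < hi i \<and> poly F (q i) = 0" if "i < d'" for i
    unfolding q_def using someI_ex[OF exq[OF that]] .
  have gap: "poly (U n) x \<noteq> 0" if "i < d'" "lo i < x" "x < hi i" for i x
  proof
    assume "poly (U n) x = 0"
    then obtain j where j: "j < n" "even j" "x = t j" using exh by blast
    show False
    proof (cases "i = 0")
      case True
      then have "t j < t 0" using that j n1 by (simp add: hi_def lo_def)
      then show False using mono[of 0 j] j by (cases "j = 0") auto
    next
      case False
      have a1: "2 * i - 2 < j" using refl[of "2 * i - 2" j] that j False d'_le[OF that(1)]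
        by (simp add: lo_def)
      have a2: "j < 2 * i"
      proof (cases "2 * i < n")
        case True then show ?thesis using refl[of j "2 * i"] that j by (simp add: hi_def)
      next
        case False then show ?thesis using j d'_le[OF that(1)] by simp
      qed
      from a1 a2 j(2) show False by presburger
    qed
  qed
  define t' where "t' j = (if even j then q (j div 2) else t (j - 1))" for j
  have cons': "t' j < t' (Suc j)" if "Suc j < Suc n" for j
  proof (cases "even j")
    case True
    have "j div 2 < d'" using that unfolding d'_def by linarith
    moreover have "2 * (j div 2) = j" using True by simp
    ultimately show ?thesis using q[of "j div 2"] that True by (simp add: t'_def hi_def)
  next
    case False
    have i: "Suc j div 2 < d'" using that unfolding d'_def by linarith
    have e: "2 * (Suc j div 2) - 2 = j - 1" "Suc j div 2 \<noteq> 0" using False by presburger+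
    show ?thesis using q[OF i] False e by (simp add: t'_def lo_def)
  qed
  have rng': "u < t' j \<and> t' j < x0" if "j < Suc n" for j
  proof (cases "even j")
    case True
    have i: "j div 2 < d'" using that unfolding d'_def by linarith
    then show ?thesis using q[OF i] lo_ge[OF i] hi_le[of "j div 2"] True by (auto simp: t'_def)
  next
    case False
    then have "j - 1 < n" using that by arith
    then show ?thesis using rng[of "j - 1"] False by (simp add: t'_def)
  qed
  have ev': "poly (U (Suc n)) (t' j) = 0 \<and> (-1::real) ^ ((Suc n - j) div 2) * poly (U (Suc n - 1)) (t' j) > 0"
    if j: "j < Suc n" "even j" for j
  proof -
    define i where "i = j div 2"
    have i: "i < d'" "j = 2 * i" using j unfolding d'_def i_def by (linarith, simp)
    have root: "poly (U (Suc n)) (t' j) = 0" using q[OF i(1)] j by (simp add: t'_def F_def i_def)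
    have sgn: "(-1::real) ^ ((Suc n - j) div 2) * poly (U n) (q i) > 0"
    proof (cases "i = 0")
      case True
      have "poly (U n) u * poly (U n) (q i) > 0"
      proof (rule poly_same_sign)
        show "u \<le> q i" using q[OF i(1)] True by (simp add: lo_def)
        fix z assume z: "u \<le> z" "z \<le> q i"
        show "poly (U n) z \<noteq> 0"
        proof (cases "z = u")
          case True then show ?thesis using E2[of n] by auto
        next
          case False then show ?thesis using gap[OF i(1), of z] z q[OF i(1)] \<open>i = 0\<close>
            by (auto simp: lo_def)
        qed
      qed
      moreover have "(Suc n - j) div 2 = (n + 1) div 2" using True i by simp
      ultimately show ?thesis using sign_transfer E2[of n] by metis
    next
      case False
      define r where "r = t (2 * i - 1)"
      have r1: "2 * i - 1 < n" "odd (2 * i - 1)" using d'_le[OF i(1)] False by auto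
      have e1: "Suc (2 * i - 2) = 2 * i - 1" using False by simp
      have rlo: "lo i < r" using cons[of "2 * i - 2"] r1 False unfolding e1
        by (simp add: lo_def r_def)
      have rhi: "r < hi i"
      proof (cases "2 * i < n")
        case True
        have e2: "Suc (2 * i - 1) = 2 * i" using False by simp
        show ?thesis using cons[of "2 * i - 1"] True unfolding e2
          by (simp add: hi_def r_def)
      next
        case False then show ?thesis using rng[OF r1(1)] by (simp add: hi_def r_def)
      qed
      have rs: "(-1::real) ^ ((n - (2 * i - 1)) div 2) * poly (U n) r > 0"
        using od[OF r1] by (simp add: r_def)
      have "poly (U n) r * poly (U n) (q i) > 0"
      proof (cases "r \<le> q i")
        case True
        show ?thesis
        proof (rule poly_same_sign[OF True])
          fix z assume "r \<le> z" "z \<le> q i"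
          then show "poly (U n) z \<noteq> 0" using gap[OF i(1), of z] rlo q[OF i(1)] by auto
        qed
      next
        case False
        then have "q i \<le> r" by simp
        then have "poly (U n) (q i) * poly (U n) r > 0"
        proof (rule poly_same_sign)
          fix z assume "q i \<le> z" "z \<le> r"
          then show "poly (U n) z \<noteq> 0" using gap[OF i(1), of z] rhi q[OF i(1)] by auto
        qed
        then show ?thesis by (simp add: mult.commute)
      qed
      moreover have "n - (2 * i - 1) = Suc n - j" using i False by simp
      ultimately show ?thesis using sign_transfer rs by metis
    qed
    show ?thesis using root sgn by (simp add: t'_def i_def j)
  qed
  have od': "poly (U (Suc n - 1)) (t' j) = 0 \<and> (-1::real) ^ ((Suc n - j) div 2) * poly (U (Suc n)) (t' j) > 0"
    if j: "j < Suc n" "odd j" for j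
  proof -
    have j1: "j - 1 < n" "even (j - 1)" using j by (arith, simp)
    have e: "n - (j - 1) = Suc n - j" using j by (cases j) auto
    show ?thesis using ev[OF j1] Ft[OF j1] j e by (simp add: t'_def F_def)
  qed
  have injq: "inj_on q {..<d'}"
  proof (rule inj_onI)
    fix i1 i2 assume i: "i1 \<in> {..<d'}" "i2 \<in> {..<d'}" "q i1 = q i2"
    have mono': "\<And>i j. i < j \<Longrightarrow> j < Suc n \<Longrightarrow> t' i < t' j" using mono_from_suc[of "Suc n" t'] cons' by blast
    have b: "2 * i1 < Suc n" "2 * i2 < Suc n" using i unfolding d'_def by auto
    show "i1 = i2"
    proof (rule ccontr)
      assume "i1 \<noteq> i2"
      then have "2 * i1 < 2 * i2 \<or> 2 * i2 < 2 * i1" by auto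
      then show False using mono'[of "2 * i1" "2 * i2"] mono'[of "2 * i2" "2 * i1"] b i
        by (auto simp: t'_def)
    qed
  qed
  have exh1: "\<exists>j<Suc n. even j \<and> x = t' j" if rx: "poly (U (Suc n)) x = 0" for x
  proof -
    have nz: "U (Suc n) \<noteq> 0" using U_x0_pos[of "Suc n"] by auto
    have "degree (U (Suc n)) \<le> d'" using degree_U[of "Suc n"] unfolding d'_def by simp
    then obtain i where "i < d'" "x = q i"
      using roots_exhaust[OF nz _ injq, of x] q rx by (auto simp: F_def)
    then show ?thesis by (intro exI[of _ "2 * i"]) (auto simp: t'_def d'_def)
  qed
  have exh2: "\<exists>j<Suc n. odd j \<and> x = t' j" if rx: "poly (U (Suc n - 1)) x = 0" for x
  proof -
    obtain j where "j < n" "even j" "x = t j" using exh rx by auto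
    then show ?thesis by (intro exI[of _ "Suc j"]) (auto simp: t'_def)
  qed
  have "inv (Suc n) t'"
    unfolding inv_def using rng' cons' ev' od' exh1 exh2 by blast
  then show ?thesis by blast
qed

end

context zsetting
begin

lemma inv_ex: "n \<ge> 1 \<Longrightarrow> \<exists>t. inv n t"
proof (induction n)
  case 0 then show ?case by simp
next
  case (Suc n)
  show ?case
  proof (cases "n = 0")
    case True then show ?thesis using inv_1 by auto
  next
    case False
    then obtain t where "inv n t" using Suc by auto
    then show ?thesis using inv_step[of n t] False by auto
  qed
qed

lemma inv_facts:
  assumes "inv n t"
  shows "\<And>j. j < n \<Longrightarrow> u < t j \<and> t j < x0"
    and "\<And>i j. i < j \<Longrightarrow> j < n \<Longrightarrow> t i < t j"
    and "\<And>j. j < n \<Longrightarrow> even j \<Longrightarrow> poly (U n) (t j) = 0"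
    and "\<And>j. j < n \<Longrightarrow> odd j \<Longrightarrow> poly (U (n - 1)) (t j) = 0"
    and "\<And>x. poly (U n) x = 0 \<Longrightarrow> \<exists>j<n. even j \<and> x = t j"
    and "\<And>x. poly (U (n - 1)) x = 0 \<Longrightarrow> \<exists>j<n. odd j \<and> x = t j"
proof -
  have cons: "\<And>j. Suc j < n \<Longrightarrow> t j < t (Suc j)" using assms unfolding inv_def by blast
  show "\<And>i j. i < j \<Longrightarrow> j < n \<Longrightarrow> t i < t j" using mono_from_suc[of n t] cons by blast
qed (use assms in \<open>unfold inv_def, blast+\<close>)

lemma U_roots_range: "poly (U n) x = 0 \<Longrightarrow> u < x \<and> x < x0"
proof (cases "n = 0")
  case True then show "poly (U n) x = 0 \<Longrightarrow> ?thesis" by simp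
next
  case False
  then obtain t where t: "inv n t" using inv_ex by fastforce
  assume "poly (U n) x = 0"
  then obtain j where "j < n" "x = t j" using inv_facts(5)[OF t] by blast
  then show ?thesis using inv_facts(1)[OF t] by blast
qed

lemma U_nz: "U n \<noteq> 0" using U_x0_pos[of n] by auto
lemma Uc_nz: "Uc n \<noteq> 0"
proof
  assume "Uc n = 0"
  then have "poly (Uc n) (of_real x0) = 0" by simp
  then show False using poly_Uc_real[of n x0] U_x0_pos[of n] by simp
qed

lemma even_roots:
  assumes "inv n t"
  shows "inj_on (\<lambda>i. t (2 * i)) {..<(n + 1) div 2}"
    and "\<And>i. i < (n + 1) div 2 \<Longrightarrow> poly (U n) (t (2 * i)) = 0"
proof -
  show "inj_on (\<lambda>i. t (2 * i)) {..<(n + 1) div 2}"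
  proof (rule inj_onI)
    fix i1 i2 assume i: "i1 \<in> {..<(n + 1) div 2}" "i2 \<in> {..<(n + 1) div 2}" "t (2 * i1) = t (2 * i2)"
    have b: "2 * i1 < n" "2 * i2 < n" using i by auto
    show "i1 = i2"
    proof (rule ccontr)
      assume "i1 \<noteq> i2"
      then have "2 * i1 < 2 * i2 \<or> 2 * i2 < 2 * i1" by auto
      then show False using inv_facts(2)[OF assms, of "2 * i1" "2 * i2"]
          inv_facts(2)[OF assms, of "2 * i2" "2 * i1"] b i by auto
    qed
  qed
  fix i assume "i < (n + 1) div 2"
  then show "poly (U n) (t (2 * i)) = 0" using inv_facts(3)[OF assms, of "2 * i"] by auto
qed

lemma degree_U_eq: "degree (U n) = (n + 1) div 2"
proof (cases "n = 0")
  case True then show ?thesis by simp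
next
  case False
  then obtain t where t: "inv n t" using inv_ex by fastforce
  have "(n + 1) div 2 = card ((\<lambda>i. t (2 * i)) ` {..<(n + 1) div 2})"
    using even_roots(1)[OF t] by (simp add: card_image)
  also have "\<dots> \<le> card {x. poly (U n) x = 0}"
    by (rule card_mono[OF poly_roots_finite[OF U_nz]]) (use even_roots(2)[OF t] in auto)
  also have "\<dots> \<le> degree (U n)" by (rule card_poly_roots_bound[OF U_nz])
  finally show ?thesis using degree_U[of n] by simp
qed

lemma Uc_roots: "poly (Uc n) z = 0 \<Longrightarrow> \<exists>x. z = of_real x \<and> poly (U n) x = 0"
proof (cases "n = 0")
  case True then show "poly (Uc n) z = 0 \<Longrightarrow> ?thesis" by simp
next
  case False
  then obtain t where t: "inv n t" using inv_ex by fastforce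
  assume rz: "poly (Uc n) z = 0"
  have inj: "inj_on (\<lambda>i. complex_of_real (t (2 * i))) {..<(n + 1) div 2}"
    using even_roots(1)[OF t] by (auto simp: inj_on_def)
  obtain i where "i < (n + 1) div 2" "z = of_real (t (2 * i))"
    using roots_exhaust[OF Uc_nz degree_Uc inj, of z] rz even_roots(2)[OF t] poly_Uc_real by auto
  then show ?thesis using even_roots(2)[OF t] by blast
qed

lemma degree_Uc_eq: "degree (Uc n) = (n + 1) div 2"
proof (cases "n = 0")
  case True then show ?thesis by simp
next
  case False
  then obtain t where t: "inv n t" using inv_ex by fastforce
  have inj: "inj_on (\<lambda>i. complex_of_real (t (2 * i))) {..<(n + 1) div 2}"
    using even_roots(1)[OF t] by (auto simp: inj_on_def)
  have "(n + 1) div 2 = card ((\<lambda>i. complex_of_real (t (2 * i))) ` {..<(n + 1) div 2})"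
    using inj by (simp add: card_image)
  also have "\<dots> \<le> card {x. poly (Uc n) x = 0}"
    by (rule card_mono[OF poly_roots_finite[OF Uc_nz]]) (use even_roots(2)[OF t] poly_Uc_real in auto)
  also have "\<dots> \<le> degree (Uc n)" by (rule card_poly_roots_bound[OF Uc_nz])
  finally show ?thesis using degree_Uc[of n] by simp
qed

lemma smaller_root:
  assumes "poly (U n) r = 0"
  shows "\<exists>r'. poly (U (Suc n)) r' = 0 \<and> r' < r"
proof -
  obtain t where t: "inv (Suc n) t" using inv_ex[of "Suc n"] by auto
  obtain j where j: "j < Suc n" "odd j" "r = t j" using inv_facts(6)[OF t] assms by auto
  have "t 0 < t j" using inv_facts(2)[OF t, of 0 j] j by (cases j) auto
  then show ?thesis using inv_facts(3)[OF t, of 0] j by auto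
qed

lemma larger_root:
  assumes "poly (U (2 * m)) r = 0"
  shows "\<exists>r'. poly (U (Suc (2 * m))) r' = 0 \<and> r < r'"
proof -
  obtain t where t: "inv (Suc (2 * m)) t" using inv_ex[of "Suc (2 * m)"] by auto
  obtain j where j: "j < Suc (2 * m)" "odd j" "r = t j" using inv_facts(6)[OF t] assms by auto
  have "j < 2 * m" using j by presburger
  then have "t j < t (2 * m)" using inv_facts(2)[OF t, of j "2 * m"] by auto
  then show ?thesis using inv_facts(3)[OF t, of "2 * m"] j by auto
qed

lemma smaller_root_iter:
  assumes "poly (U n) r = 0" "n \<le> n'"
  shows "\<exists>r'. poly (U n') r' = 0 \<and> r' \<le> r"
  using assms(2)
proof (induction n' rule: dec_induct)
  case base then show ?case using assms(1) by auto
next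
  case (step n')
  then obtain r' where "poly (U n') r' = 0" "r' \<le> r" by auto
  then show ?case using smaller_root[of n' r'] by force
qed

end

lemma pos_lemma:
  fixes p q :: "nat \<Rightarrow> real"
  assumes p0: "p 0 = 1" and q0: "q 0 \<ge> r"
    and rec1: "\<And>m. p (Suc m) = q m - k * p m"
    and rec2: "\<And>m. q (Suc m) = \<alpha> * p (Suc m) - k * q m"
    and k: "k > 0" and al: "\<alpha> > 0" and quad: "r\<^sup>2 - \<alpha> * r + \<alpha> * k = 0"
  shows "p m > 0 \<and> q m \<ge> r * p m"
proof -
  have rk: "r > k"
  proof -
    have "\<alpha> * (r - k) = r\<^sup>2" using quad by (simp add: algebra_simps)
    then have "\<alpha> * (r - k) \<ge> 0" by simp
    then have "r \<ge> k" using al by (simp add: zero_le_mult_iff)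
    moreover have "r \<noteq> k" using quad k al by (auto simp: power2_eq_square)
    ultimately show ?thesis by simp
  qed
  have r0: "r > 0" using rk k by simp
  have ar: "r * (\<alpha> - r) = \<alpha> * k" using quad by (simp add: algebra_simps power2_eq_square)
  have ar': "\<alpha> - r > 0"
  proof -
    have "r * (\<alpha> - r) > 0" using ar al k by simp
    then show ?thesis using r0 by (simp add: zero_less_mult_iff)
  qed
  show ?thesis
  proof (induction m)
    case 0 then show ?case using p0 q0 by simp
  next
    case (Suc m)
    have D: "q m - r * p m \<ge> 0" using Suc by simp
    have ps: "p (Suc m) > 0"
    proof -
      have "p (Suc m) \<ge> (r - k) * p m" using rec1[of m] Suc by (simp add: algebra_simps)
      moreover have "(r - k) * p m > 0" using rk Suc by simp
      ultimately show ?thesis by linarith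
    qed
    have "r * (q (Suc m) - r * p (Suc m)) = (r * (\<alpha> - r)) * p (Suc m) - r * k * q m"
      unfolding rec2 by (simp add: algebra_simps)
    also have "\<dots> = \<alpha> * k * (q m - k * p m) - r * k * q m" unfolding ar rec1 ..
    also have "\<dots> = k * ((\<alpha> - r) * q m - (\<alpha> * k) * p m)" by (simp add: algebra_simps)
    also have "\<dots> = k * ((\<alpha> - r) * q m - (r * (\<alpha> - r)) * p m)" unfolding ar ..
    also have "\<dots> = k * (\<alpha> - r) * (q m - r * p m)" by (simp add: algebra_simps)
    finally have "r * (q (Suc m) - r * p (Suc m)) = k * (\<alpha> - r) * (q m - r * p m)" .
    moreover have "k * (\<alpha> - r) * (q m - r * p m) \<ge> 0" using k ar' D by simp
    ultimately have "r * (q (Suc m) - r * p (Suc m)) \<ge> 0" by simp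
    then have "q (Suc m) - r * p (Suc m) \<ge> 0" using r0 by (simp add: zero_le_mult_iff)
    then show ?case using ps by simp
  qed
qed

lemma escape_lemma:
  fixes p q :: "nat \<Rightarrow> real"
  assumes p0: "p 0 = 1" and q0: "q 0 = rz"
    and rec1: "\<And>m. p (Suc m) = q m - k * p m"
    and rec2: "\<And>m. q (Suc m) = \<alpha> * p (Suc m) - k * q m"
    and k: "k > 0" and c: "c > 0"
    and Q: "\<And>\<rho>. k < \<rho> \<Longrightarrow> \<rho> \<le> rz \<Longrightarrow> \<rho>\<^sup>2 - \<alpha> * \<rho> + \<alpha> * k \<ge> c"
  shows "\<exists>m. p m \<le> 0 \<or> q m \<le> 0"
proof (rule ccontr)
  assume "\<not> ?thesis"
  then have pos: "\<And>m. p m > 0" "\<And>m. q m > 0" by (auto simp: not_le)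
  define \<rho> where "\<rho> m = q m / p m" for m
  have qr: "q m = \<rho> m * p m" for m using pos(1)[of m] by (simp add: \<rho>_def)
  have rk: "\<rho> m > k" for m
  proof -
    have "q m - k * p m > 0" using pos(1)[of "Suc m"] rec1[of m] by simp
    then have "(\<rho> m - k) * p m > 0" using qr[of m] by (simp add: algebra_simps)
    then show ?thesis using pos(1)[of m] by (simp add: zero_less_mult_iff)
  qed
  have ps: "p (Suc m) = p m * (\<rho> m - k)" for m using rec1[of m] qr[of m] by (simp add: algebra_simps)
  have rstep: "\<rho> (Suc m) = \<rho> m - (\<rho> m ^ 2 - \<alpha> * \<rho> m + \<alpha> * k) / (\<rho> m - k)" for m
  proof -
    have nz: "\<rho> m - k \<noteq> 0" "p m \<noteq> 0" using rk[of m] pos(1)[of m] by auto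
    have "\<rho> (Suc m) = (\<alpha> * p (Suc m) - k * q m) / p (Suc m)" by (simp add: \<rho>_def rec2)
    also have "\<dots> = (\<alpha> * (p m * (\<rho> m - k)) - k * (\<rho> m * p m)) / (p m * (\<rho> m - k))"
      unfolding ps qr ..
    also have "\<dots> = \<rho> m - (\<rho> m ^ 2 - \<alpha> * \<rho> m + \<alpha> * k) / (\<rho> m - k)"
      using nz by (simp add: field_simps power2_eq_square)
    finally show ?thesis .
  qed
  have r00: "\<rho> 0 = rz" using p0 q0 by (simp add: \<rho>_def)
  have r0k: "rz > k" using rk[of 0] r00 by simp
  define \<delta> where "\<delta> = c / (rz - k)"
  have dpos: "\<delta> > 0" using c r0k by (simp add: \<delta>_def)
  have bound: "\<rho> m \<le> rz - real m * \<delta>" for m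
  proof (induction m)
    case 0 then show ?case using r00 by simp
  next
    case (Suc m)
    have le: "\<rho> m \<le> rz" using Suc dpos by (smt (verit) mult_nonneg_nonneg of_nat_0_le_iff)
    have Qm: "\<rho> m ^ 2 - \<alpha> * \<rho> m + \<alpha> * k \<ge> c" using Q[OF rk le] .
    have "c / (rz - k) \<le> (\<rho> m ^ 2 - \<alpha> * \<rho> m + \<alpha> * k) / (\<rho> m - k)"
      by (rule frac_le) (use c Qm rk[of m] le in auto)
    then have "c / (rz - k) \<le> \<rho> m - \<rho> (Suc m)" using rstep[of m] by simp
    then have "\<delta> \<le> \<rho> m - \<rho> (Suc m)" unfolding \<delta>_def .
    then show ?case using Suc by (simp add: algebra_simps)
  qed
  obtain m where "rz - k < real m * \<delta>" using ex_less_of_nat_mult[OF dpos] by blast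
  then have "\<rho> m < k" using bound[of m] by simp
  then show False using rk[of m] by simp
qed

context setting
begin

lemma pq_rec:
  "(-1::real) ^ Suc m * poly (U (2 * Suc m)) y =
     (-1) ^ Suc m * poly (U (Suc (2 * m))) y - k * ((-1) ^ m * poly (U (2 * m)) y)"
  "(-1::real) ^ Suc (Suc m) * poly (U (Suc (2 * Suc m))) y =
     (- (a * y + b)) * ((-1) ^ Suc m * poly (U (2 * Suc m)) y) - k * ((-1) ^ Suc m * poly (U (Suc (2 * m))) y)"
proof -
  have e1: "2 * Suc m = Suc (Suc (2 * m))" by simp
  show "(-1::real) ^ Suc m * poly (U (2 * Suc m)) y =
     (-1) ^ Suc m * poly (U (Suc (2 * m))) y - k * ((-1) ^ m * poly (U (2 * m)) y)"
    unfolding e1 poly_U_SS by (simp add: algebra_simps)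
  have e2: "Suc (2 * Suc m) = Suc (Suc (Suc (2 * m)))" by simp
  show "(-1::real) ^ Suc (Suc m) * poly (U (Suc (2 * Suc m))) y =
     (- (a * y + b)) * ((-1) ^ Suc m * poly (U (2 * Suc m)) y) - k * ((-1) ^ Suc m * poly (U (Suc (2 * m))) y)"
    unfolding e2 poly_U_SS[of "Suc (2 * m)"] by (simp add: algebra_simps e1)
qed

lemma sign_from_pq:
  assumes "\<And>m. (-1::real) ^ m * poly (U (2 * m)) y > 0"
    and "\<And>m. (-1::real) ^ Suc m * poly (U (Suc (2 * m))) y > 0"
  shows "(-1::real) ^ ((n + 1) div 2) * poly (U n) y > 0"
proof (cases "even n")
  case True
  define m where "m = n div 2"
  have "n = 2 * m" using True unfolding m_def by presburger
  then show ?thesis using assms(1)[of m] by simp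
next
  case False
  define m where "m = n div 2"
  have "n = Suc (2 * m)" using False unfolding m_def by presburger
  then show ?thesis using assms(2)[of m] by simp
qed

lemma E2_setting:
  assumes ux: "u < x0" and quad: "r\<^sup>2 - (- (a * u + b)) * r + (- (a * u + b)) * k = 0"
    and ru: "- u \<ge> r"
  shows "(-1::real) ^ ((n + 1) div 2) * poly (U n) u > 0"
proof -
  define p where "p m = (-1::real) ^ m * poly (U (2 * m)) u" for m
  define q where "q m = (-1::real) ^ Suc m * poly (U (Suc (2 * m))) u" for m
  have al: "- (a * u + b) > 0"
  proof -
    have "- (a * u + b) = a * (x0 - u)" using A_x0 by (simp add: algebra_simps)
    then show ?thesis using a_pos ux by simp
  qed
  have r1: "p (Suc m) = q m - k * p m" for m unfolding p_def q_def by (rule pq_rec(1))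
  have r2: "q (Suc m) = (- (a * u + b)) * p (Suc m) - k * q m" for m
    unfolding p_def q_def by (rule pq_rec(2))
  have p0: "p 0 = 1" and q0: "q 0 \<ge> r" using ru by (simp_all add: p_def q_def)
  have H: "p m > 0 \<and> q m \<ge> r * p m" for m
    using pos_lemma[where p = p and q = q and r = r and k = k and \<alpha> = "- (a * u + b)", OF p0 q0 r1 r2 k_pos al quad] .
  have rk: "r > 0"
  proof -
    have "(- (a * u + b)) * (r - k) = r\<^sup>2" using quad by (simp add: algebra_simps)
    then have "- (a * u + b) * (r - k) \<ge> 0" by simp
    then have "r \<ge> k" using al by (simp add: zero_le_mult_iff)
    then show ?thesis using k_pos by simp
  qed
  show ?thesis
  proof (rule sign_from_pq)
    fix m show "(-1::real) ^ m * poly (U (2 * m)) u > 0" using H[of m] by (simp add: p_def)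
    show "(-1::real) ^ Suc m * poly (U (Suc (2 * m))) u > 0"
    proof -
      have "r * p m > 0" using H[of m] rk by simp
      then have "q m > 0" using H[of m] by linarith
      then show ?thesis by (simp add: q_def)
    qed
  qed
qed

lemma escape_setting:
  assumes al: "- (a * y + b) > 0" and c: "c > 0"
    and Q: "\<And>\<rho>. k < \<rho> \<Longrightarrow> \<rho> \<le> - y \<Longrightarrow> \<rho>\<^sup>2 - (- (a * y + b)) * \<rho> + (- (a * y + b)) * k \<ge> c"
  shows "\<exists>n. (-1::real) ^ ((n + 1) div 2) * poly (U n) y \<le> 0"
proof (rule ccontr)
  assume "\<not> ?thesis"
  then have all: "(-1::real) ^ ((n + 1) div 2) * poly (U n) y > 0" for n by (simp add: not_le)
  define p where "p m = (-1::real) ^ m * poly (U (2 * m)) y" for m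
  define q where "q m = (-1::real) ^ Suc m * poly (U (Suc (2 * m))) y" for m
  have r1: "p (Suc m) = q m - k * p m" for m unfolding p_def q_def by (rule pq_rec(1))
  have r2: "q (Suc m) = (- (a * y + b)) * p (Suc m) - k * q m" for m
    unfolding p_def q_def by (rule pq_rec(2))
  have p0: "p 0 = 1" and q0: "q 0 = - y" by (simp_all add: p_def q_def)
  have "\<exists>m. p m \<le> 0 \<or> q m \<le> 0"
    using escape_lemma[where p = p and q = q and rz = "- y" and k = k and \<alpha> = "- (a * y + b)" and c = c, OF p0 q0 r1 r2 k_pos c Q] .
  then obtain m where "p m \<le> 0 \<or> q m \<le> 0" by blast
  moreover have "p m > 0" using all[of "2 * m"] by (simp add: p_def)
  moreover have "q m > 0" using all[of "Suc (2 * m)"] by (simp add: q_def)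
  ultimately show False by simp
qed

end

context zsetting
begin

lemma root_near_u:
  assumes "(-1::real) ^ ((n + 1) div 2) * poly (U n) y \<le> 0" "u < y"
  shows "\<exists>r. u < r \<and> r \<le> y \<and> poly (U n) r = 0"
proof (cases "poly (U n) y = 0")
  case True then show ?thesis using assms by auto
next
  case False
  define s where "s = (-1::real) ^ ((n + 1) div 2)"
  have s2: "s * s = 1" unfolding s_def by (simp flip: power_add)
  have A: "s * poly (U n) u > 0" using E2[of n] by (simp add: s_def)
  have sn: "s \<noteq> 0" using s2 by auto
  have "s * poly (U n) y \<le> 0" using assms(1) unfolding s_def .
  moreover have "s * poly (U n) y \<noteq> 0" using sn False by simp
  ultimately have B: "s * poly (U n) y < 0" by linarith
  have "(s * poly (U n) u) * (s * poly (U n) y) < 0" using A B by (simp add: mult_pos_neg)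
  also have "(s * poly (U n) u) * (s * poly (U n) y) = (s * s) * (poly (U n) u * poly (U n) y)"
    by (simp add: algebra_simps)
  finally have "poly (U n) u * poly (U n) y < 0" using s2 by simp
  then obtain r where "u < r" "r < y" "poly (U n) r = 0" using poly_IVT[OF assms(2)] by blast
  then show ?thesis by auto
qed

end

fun S :: "nat \<Rightarrow> real \<Rightarrow> real" where
  "S 0 t = 1"
| "S (Suc 0) t = t"
| "S (Suc (Suc m)) t = t * S (Suc m) t - S m t"

lemma S_trig: "S m (2 * cos \<theta>) * sin \<theta> = sin (real (Suc m) * \<theta>)"
proof -
  have id: "sin (x + \<theta>) = 2 * cos \<theta> * sin x - sin (x - \<theta>)" for x
    by (simp add: sin_add sin_diff)
  have "S m (2 * cos \<theta>) * sin \<theta> = sin (real (Suc m) * \<theta>) \<and>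
        S (Suc m) (2 * cos \<theta>) * sin \<theta> = sin (real (Suc (Suc m)) * \<theta>)"
  proof (induction m)
    case 0 then show ?case by (simp add: sin_double)
  next
    case (Suc m)
    have "S (Suc (Suc m)) (2 * cos \<theta>) * sin \<theta> =
        2 * cos \<theta> * (S (Suc m) (2 * cos \<theta>) * sin \<theta>) - S m (2 * cos \<theta>) * sin \<theta>"
      by (simp add: algebra_simps)
    also have "\<dots> = 2 * cos \<theta> * sin (real (Suc (Suc m)) * \<theta>) - sin (real (Suc m) * \<theta>)"
      using Suc by simp
    also have "\<dots> = sin (real (Suc (Suc (Suc m))) * \<theta>)"
      using id[of "real (Suc (Suc m)) * \<theta>"] by (simp add: algebra_simps)
    finally show ?case using Suc by simp
  qed
  then show ?thesis by blast
qed

context setting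
begin

lemma P_rec: "poly (U (2 * Suc (Suc m))) y =
   (a * y + b + 2 * k) * poly (U (2 * Suc m)) y - k\<^sup>2 * poly (U (2 * m)) y"
proof -
  have e1: "2 * Suc (Suc m) = Suc (Suc (Suc (Suc (2 * m))))" by simp
  have e2: "2 * Suc m = Suc (Suc (2 * m))" by simp
  have h4: "poly (U (Suc (Suc (Suc (Suc (2 * m)))))) y = poly (U (Suc (Suc (Suc (2 * m))))) y + k * poly (U (Suc (Suc (2 * m)))) y"
    using poly_U_SS[of "Suc (Suc (2 * m))" y] by simp
  have h3: "poly (U (Suc (Suc (Suc (2 * m))))) y = (a * y + b) * poly (U (Suc (Suc (2 * m)))) y + k * poly (U (Suc (2 * m))) y"
    using poly_U_SS[of "Suc (2 * m)" y] by simp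
  have h2: "poly (U (Suc (Suc (2 * m)))) y = poly (U (Suc (2 * m))) y + k * poly (U (2 * m)) y"
    using poly_U_SS[of "2 * m" y] by simp
  show ?thesis unfolding e1 e2 h4 h3 using h2 by (simp add: algebra_simps power2_eq_square)
qed

definition Yf :: "real \<Rightarrow> real \<Rightarrow> nat \<Rightarrow> real" where
  "Yf t e m = (if m = 0 then 1 else S m t + e * S (m - 1) t)"

lemma Yf_rec: "Yf t e (Suc (Suc m)) = t * Yf t e (Suc m) - Yf t e m"
  by (cases m) (simp_all add: Yf_def algebra_simps)

lemma P_formula:
  fixes y :: real and m :: nat
  defines "t \<equiv> (a * y + b) / k + 2" and "e \<equiv> ((1 - a) * y - b - k) / k"
  shows "poly (U (2 * m)) y = k ^ m * Yf t e m"
proof -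
  have "poly (U (2 * m)) y = k ^ m * Yf t e m \<and> poly (U (2 * Suc m)) y = k ^ Suc m * Yf t e (Suc m)"
  proof (induction m)
    case 0
    have "k * (t + e) = y + k" using k_pos unfolding t_def e_def by (simp add: field_simps)
    then show ?case by (simp add: Yf_def numeral_2_eq_2)
  next
    case (Suc m)
    have kt: "a * y + b + 2 * k = k * t" using k_pos unfolding t_def by (simp add: field_simps)
    have IH1: "poly (U (2 * m)) y = k ^ m * Yf t e m" and IH2: "poly (U (2 * Suc m)) y = k ^ Suc m * Yf t e (Suc m)"
      using Suc.IH by blast+
    have "poly (U (2 * Suc (Suc m))) y = (k * t) * (k ^ Suc m * Yf t e (Suc m)) - k\<^sup>2 * (k ^ m * Yf t e m)"
      unfolding P_rec[of m y] kt IH1 IH2 ..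
    also have "\<dots> = k ^ Suc (Suc m) * Yf t e (Suc (Suc m))"
      unfolding Yf_rec by (simp add: algebra_simps power2_eq_square)
    finally show ?case using IH2 by simp
  qed
  then show ?thesis by blast
qed

definition ypt :: "nat \<Rightarrow> real" where
  "ypt m = x0 - 2 * k / a * (1 - cos (pi / real m))"

lemma ypt_le: "ypt m \<le> x0"
  using k_pos a_pos cos_le_one[of "pi / real m"] by (simp add: ypt_def)

lemma P_neg: assumes m: "m \<ge> 2" shows "poly (U (2 * m)) (ypt m) < 0"
proof -
  define \<theta> where "\<theta> = pi / real m"
  have th: "0 < \<theta>" "\<theta> < pi" using m by (auto simp: \<theta>_def field_simps)
  have sn: "sin \<theta> > 0" using sin_gt_zero[OF th] .
  have "a * ypt m + b = (a * x0 + b) - 2 * k * (1 - cos \<theta>)"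
    using a_pos unfolding ypt_def \<theta>_def by (simp add: field_simps)
  then have "a * ypt m + b = - 2 * k * (1 - cos \<theta>)" using A_x0 by simp
  then have t: "(a * ypt m + b) / k + 2 = 2 * cos \<theta>"
    using k_pos by (simp add: field_simps)
  have m1: "real (Suc (m - 1)) * \<theta> = pi" using m by (simp add: \<theta>_def of_nat_diff)
  have S1: "S (m - 1) (2 * cos \<theta>) = 0"
    using S_trig[of "m - 1" \<theta>] m1 sn by simp
  have m2: "real (Suc m) * \<theta> = \<theta> + pi" using m by (simp add: \<theta>_def field_simps)
  have "S m (2 * cos \<theta>) * sin \<theta> = (-1) * sin \<theta>"
    using S_trig[of m \<theta>] m2 by (simp add: sin_add)
  then have S2: "S m (2 * cos \<theta>) = -1" using sn by (metis mult_right_cancel less_irrefl)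
  have "poly (U (2 * m)) (ypt m) = k ^ m * (S m (2 * cos \<theta>) + ((1 - a) * ypt m - b - k) / k * S (m - 1) (2 * cos \<theta>))"
    using P_formula[where y = "ypt m" and m = m] m unfolding t by (simp add: Yf_def)
  also have "\<dots> = - (k ^ m)" using S1 S2 by simp
  finally show ?thesis using k_pos by simp
qed

lemma root_near_x0: assumes "m \<ge> 2" shows "\<exists>r. ypt m < r \<and> r < x0 \<and> poly (U (2 * m)) r = 0"
proof -
  have "ypt m < x0" using ypt_le[of m] P_neg[OF assms] U_x0_pos[of "2 * m"]
    by (cases "ypt m = x0") auto
  then show ?thesis using poly_IVT_pos[OF _ P_neg[OF assms] U_x0_pos] by blast
qed

lemma ypt_eventually: assumes "\<epsilon> > 0" shows "\<exists>M. \<forall>m\<ge>M. ypt m > x0 - \<epsilon>"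
proof -
  have "(\<lambda>m. cos (pi / real m)) \<longlonglongrightarrow> cos 0"
    by (intro tendsto_intros)
  then have "(\<lambda>m. cos (pi / real m)) \<longlonglongrightarrow> 1" by simp
  moreover have "1 - \<epsilon> * a / (2 * k) < 1" using assms a_pos k_pos by simp
  ultimately have "eventually (\<lambda>m. cos (pi / real m) > 1 - \<epsilon> * a / (2 * k)) sequentially"
    by (rule order_tendstoD)
  then obtain M where M: "\<And>m. m \<ge> M \<Longrightarrow> cos (pi / real m) > 1 - \<epsilon> * a / (2 * k)"
    unfolding eventually_sequentially by blast
  have "ypt m > x0 - \<epsilon>" if "m \<ge> M" for m
  proof -
    have "1 - cos (pi / real m) < \<epsilon> * a / (2 * k)" using M[OF that] by simp
    then have "2 * k / a * (1 - cos (pi / real m)) < 2 * k / a * (\<epsilon> * a / (2 * k))"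
      using a_pos k_pos by (intro mult_strict_left_mono) auto
    also have "\<dots> = \<epsilon>" using a_pos k_pos by simp
    finally show ?thesis by (simp add: ypt_def)
  qed
  then show ?thesis by blast
qed

end

context zsetting
begin

lemma roots_fin: "finite {x. poly (U n) x = 0}" using poly_roots_finite[OF U_nz] .

lemma roots_ne: "n \<ge> 1 \<Longrightarrow> {x. poly (U n) x = 0} \<noteq> {}"
proof -
  assume "n \<ge> 1"
  then obtain t where t: "inv n t" using inv_ex by blast
  have "poly (U n) (t 0) = 0" using inv_facts(3)[OF t, of 0] \<open>n \<ge> 1\<close> by simp
  then show ?thesis by blast
qed

lemma lim_x0: "\<exists>z. (\<forall>n\<ge>1. poly (U n) (z n) = 0) \<and> z \<longlonglongrightarrow> x0"
proof -
  define Mx where "Mx n = Max {x. poly (U n) x = 0}" for n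
  have root: "poly (U n) (Mx n) = 0" if "n \<ge> 1" for n
    using Max_in[OF roots_fin roots_ne[OF that]] by (simp add: Mx_def)
  have ge: "r \<le> Mx n" if "poly (U n) r = 0" for n r
    using Max_ge[OF roots_fin, of r n] that by (simp add: Mx_def)
  have lt: "Mx n < x0" if "n \<ge> 1" for n using U_roots_range[OF root[OF that]] by simp
  have "Mx \<longlonglongrightarrow> x0"
  proof (rule LIMSEQ_I)
    fix \<epsilon> :: real assume e: "\<epsilon> > 0"
    obtain M where M: "\<And>m. m \<ge> M \<Longrightarrow> ypt m > x0 - \<epsilon>" using ypt_eventually[OF e] by blast
    define N where "N = 2 * max M 2"
    have "norm (Mx n - x0) < \<epsilon>" if n: "n \<ge> N" for n
    proof -
      define m where "m = n div 2"
      have m2: "m \<ge> 2" "m \<ge> M" using n unfolding N_def m_def by auto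
      obtain r where r: "ypt m < r" "poly (U (2 * m)) r = 0" using root_near_x0[OF m2(1)] by blast
      have "\<exists>r'. poly (U n) r' = 0 \<and> r \<le> r'"
      proof (cases "even n")
        case True then have "n = 2 * m" unfolding m_def by simp
        then show ?thesis using r by auto
      next
        case False then have "n = Suc (2 * m)" unfolding m_def by presburger
        then show ?thesis using larger_root[OF r(2)] by (auto intro: less_imp_le)
      qed
      then obtain r' where "poly (U n) r' = 0" "r \<le> r'" by blast
      then have "x0 - \<epsilon> < Mx n" using ge[of n r'] M[OF m2(2)] r by linarith
      moreover have "Mx n < x0" using lt[of n] n m2 unfolding N_def by simp
      ultimately show ?thesis by simp
    qed
    then show "\<exists>N. \<forall>n\<ge>N. norm (Mx n - x0) < \<epsilon>" by blast
  qed
  then show ?thesis using root by blast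
qed

lemma lim_u:
  assumes esc: "\<And>\<epsilon>. \<epsilon> > 0 \<Longrightarrow> \<exists>y n. u < y \<and> y < u + \<epsilon> \<and> (-1::real) ^ ((n + 1) div 2) * poly (U n) y \<le> 0"
  shows "\<exists>z. (\<forall>n\<ge>1. poly (U n) (z n) = 0) \<and> z \<longlonglongrightarrow> u"
proof -
  define Mn where "Mn n = Min {x. poly (U n) x = 0}" for n
  have root: "poly (U n) (Mn n) = 0" if "n \<ge> 1" for n
    using Min_in[OF roots_fin roots_ne[OF that]] by (simp add: Mn_def)
  have le: "Mn n \<le> r" if "poly (U n) r = 0" for n r
    using Min_le[OF roots_fin, of r n] that by (simp add: Mn_def)
  have gt: "u < Mn n" if "n \<ge> 1" for n using U_roots_range[OF root[OF that]] by simp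
  have "Mn \<longlonglongrightarrow> u"
  proof (rule LIMSEQ_I)
    fix \<epsilon> :: real assume e: "\<epsilon> > 0"
    obtain y n0 where y: "u < y" "y < u + \<epsilon>" "(-1::real) ^ ((n0 + 1) div 2) * poly (U n0) y \<le> 0"
      using esc[OF e] by blast
    obtain r where r: "u < r" "r \<le> y" "poly (U n0) r = 0" using root_near_u[OF y(3) y(1)] by blast
    have "norm (Mn n - u) < \<epsilon>" if n: "n \<ge> max n0 1" for n
    proof -
      obtain r' where "poly (U n) r' = 0" "r' \<le> r" using smaller_root_iter[OF r(3), of n] n by auto
      then have "Mn n < u + \<epsilon>" using le[of n r'] r y by linarith
      moreover have "u < Mn n" using gt[of n] n by simp
      ultimately show ?thesis by simp
    qed
    then show "\<exists>N. \<forall>n\<ge>N. norm (Mn n - u) < \<epsilon>" by blast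
  qed
  then show ?thesis using root by blast
qed

end

locale params =
  fixes a b c d k x0 :: real
  assumes a_pos: "a > 0" and k_pos: "k > 0" and x0_pos: "x0 > 0"
    and b_eq: "b = - a * x0" and c_eq: "c = a * k" and d_eq: "d = b * k"
begin

lemma b_neg: "b < 0" using a_pos x0_pos b_eq by simp

lemma c_pos: "c > 0" using a_pos k_pos c_eq by simp
lemma d_neg: "d < 0" using b_neg k_pos d_eq by (simp add: mult_neg_pos)

sublocale S: setting a b k using a_pos b_neg k_pos by unfold_locales

lemma Sx0: "S.x0 = x0"
  unfolding S.x0_def using a_pos by (simp add: b_eq)

lemma x0_eq: "x0 = xB c d"
  using a_pos k_pos by (simp add: xB_def d_eq c_eq b_eq)

lemma F_eq: "Fval a b c d = a * x0 * (a * x0 - 2 * k * (2 - a))"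
  unfolding Fval_def d_eq c_eq b_eq by (simp add: algebra_simps power2_eq_square)

lemma Dg_eq: "Delta_g a b c d = Fval a b c d + c\<^sup>2"
  unfolding Fval_def Delta_g_def d_eq c_eq by (simp add: algebra_simps power2_eq_square)

lemma xDm_eq: "xDelta_minus a b c d = x0 - 4 * k / a"
proof -
  have "DeltaDelta a b c d = c\<^sup>2"
    unfolding DeltaDelta_def xA_def d_eq c_eq b_eq using a_pos by (simp add: field_simps)
  then have "sqrt (DeltaDelta a b c d) = c" using c_pos by simp
  then show ?thesis unfolding xDelta_minus_def using a_pos
    by (simp add: xA_def b_eq c_eq field_simps power2_eq_square)
qed

end

context params
begin

definition g :: "real \<Rightarrow> real" where "g z = (1 - a) * z\<^sup>2 - (b + c) * z - d"

lemma Dg_pos: "Fval a b c d > 0 \<Longrightarrow> Delta_g a b c d > 0"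
proof -
  assume "Fval a b c d > 0"
  moreover have "c\<^sup>2 > 0" using c_pos by simp
  ultimately show ?thesis using Dg_eq by linarith
qed

lemma G_neg: assumes "Fval a b c d > 0" "a \<le> 1" shows "b + c < 0"
proof -
  have "a * x0 * (a * x0 - 2 * k * (2 - a)) > 0" using assms F_eq by simp
  moreover have "a * x0 > 0" using a_pos x0_pos by simp
  ultimately have "a * x0 - 2 * k * (2 - a) > 0" using zero_less_mult_pos by blast
  moreover have "2 * k * (2 - a) \<ge> 2 * k * 1" using assms(2) k_pos by (intro mult_left_mono) auto
  moreover have "a * k \<le> 1 * k" using assms(2) k_pos by (intro mult_right_mono) auto
  ultimately show ?thesis using k_pos unfolding b_eq c_eq by linarith
qed

lemma g_quad: "4 * (1 - a) * g z = (2 * (1 - a) * z - (b + c))\<^sup>2 - Delta_g a b c d"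
  unfolding g_def Delta_g_def by (simp add: algebra_simps power2_eq_square)

lemma g_w_neg: assumes "a < 2" "Fval a b c d > 0" shows "g (b / (2 - a)) < 0"
proof -
  define w where "w = b / (2 - a)"
  have bw: "b = (2 - a) * w" using assms(1) by (simp add: w_def)
  have "(2 - a)\<^sup>2 * g w = - Fval a b c d"
    unfolding g_def Fval_def by (simp add: bw algebra_simps power2_eq_square)
  then have "(2 - a)\<^sup>2 * g (b / (2 - a)) = - Fval a b c d" by (simp add: w_def)
  then have h: "(2 - a)\<^sup>2 * g (b / (2 - a)) < 0" using assms(2) by simp
  show ?thesis
  proof (rule ccontr)
    assume "\<not> g (b / (2 - a)) < 0"
    then have "g (b / (2 - a)) \<ge> 0" by simp
    then have "(2 - a)\<^sup>2 * g (b / (2 - a)) \<ge> 0" by simp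
    then show False using h by simp
  qed
qed

lemma gcase:
  assumes F: "Fval a b c d > 0"
  shows "g (uval a b c d) = 0 \<and> uval a b c d < 0 \<and> (a - 2) * uval a b c d + b < 0
    \<and> 2 * (1 - a) * uval a b c d - (b + c) > 0"
proof -
  define u where "u = uval a b c d"
  define D where "D = Delta_g a b c d"
  define G where "G = b + c"
  have D: "D > 0" using Dg_pos[OF F] by (simp add: D_def)
  have sD: "sqrt D > 0" using D by simp
  have sD2: "(sqrt D)\<^sup>2 = D" using D by simp
  show ?thesis
  proof (cases "a = 1")
    case True
    have G: "G < 0" using G_neg[OF F] True by (simp add: G_def)
    have u: "u = - d / G" using F True by (simp add: u_def uval_def xg_minus_def G_def)
    have gu: "g u = 0" using G True unfolding g_def u by (simp add: G_def field_simps)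
    have "d / G > 0" using G d_neg by (simp add: divide_neg_neg)
    then have un: "u < 0" unfolding u by simp
    have Fa1: "b * G + d > 0" using F True unfolding Fval_def G_def by (simp add: algebra_simps power2_eq_square)
    have "b < u" unfolding u using G Fa1 by (simp add: field_simps)
    then have "(a - 2) * u + b < 0" using True by simp
    moreover have "2 * (1 - a) * u - (b + c) > 0" using True G by (simp add: G_def)
    ultimately show ?thesis using gu un by (simp add: u_def)
  next
    case False
    have key: "2 * (1 - a) * u - G = sqrt D"
    proof (cases "a < 1")
      case True
      have "u = G / (2 * (1 - a)) + sqrt D / (2 * (1 - a))"
        using F True by (simp add: u_def uval_def xg_plus_def D_def G_def)
      then have "u = (G + sqrt D) / (2 * (1 - a))" by (simp add: add_divide_distrib)
      moreover have "2 * (1 - a) \<noteq> 0" using True by simp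
      ultimately show ?thesis by simp
    next
      case a1: False
      have "u = G / (2 * (1 - a)) - sqrt D / (2 * (a - 1))"
        using F a1 False by (simp add: u_def uval_def xg_minus_def D_def G_def)
      also have "sqrt D / (2 * (a - 1)) = - (sqrt D / (2 * (1 - a)))"
      proof -
        have "sqrt D / (2 * (a - 1)) = sqrt D / (- (2 * (1 - a)))" by simp
        also have "\<dots> = - (sqrt D / (2 * (1 - a)))" by (rule divide_minus_right)
        finally show ?thesis .
      qed
      finally have "u = (G + sqrt D) / (2 * (1 - a))" by (simp add: add_divide_distrib)
      moreover have "2 * (1 - a) \<noteq> 0" using False by simp
      ultimately show ?thesis by simp
    qed
    have gu: "g u = 0"
    proof -
      have "4 * (1 - a) * g u = 0" using g_quad[of u] key sD2 by (simp add: D_def G_def)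
      then show ?thesis using False by simp
    qed
    have un: "u < 0"
    proof (cases "a < 1")
      case True
      have G: "G < 0" using G_neg[OF F] True by (simp add: G_def)
      have "D < G\<^sup>2" unfolding D_def G_def Delta_g_def using d_neg True by (simp add: mult_neg_pos)
      then have "sqrt D < sqrt (G\<^sup>2)" using real_sqrt_less_iff[of D "G\<^sup>2"] by blast
      then have "sqrt D < - G" using G by simp
      then have "2 * (1 - a) * u < 0" using key by simp
      then show ?thesis using True by (simp add: mult_less_0_iff)
    next
      case a1: False
      have "D > G\<^sup>2" unfolding D_def G_def Delta_g_def using d_neg a1 False
        by (simp add: mult_neg_neg)
      then have "sqrt D > sqrt (G\<^sup>2)" using real_sqrt_less_iff[of "G\<^sup>2" D] by blast
      then have "sqrt D > - G" by simp
      then have "2 * (1 - a) * u > 0" using key by simp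
      then show ?thesis using a1 False by (simp add: zero_less_mult_iff)
    qed
    have L: "2 * (1 - a) * u - (b + c) > 0" using key sD by (simp add: G_def)
    have w: "(a - 2) * u + b < 0"
    proof (cases "a \<ge> 2")
      case True
      then have "(a - 2) * u \<le> 0" using un by (simp add: mult_nonneg_nonpos)
      then show ?thesis using b_neg by simp
    next
      case a2: False
      define w where "w = b / (2 - a)"
      have gw: "g w < 0" using g_w_neg[of] a2 F by (simp add: w_def)
      have wn: "w < 0" using b_neg a2 by (simp add: w_def divide_neg_pos)
      define X where "X = 2 * (1 - a) * w - G"
      have wu: "w < u"
      proof (cases "a < 1")
        case True
        have "4 * (1 - a) * g w < 0" using gw True by (simp add: mult_pos_neg)
        then have "X\<^sup>2 < D" using g_quad[of w] unfolding X_def D_def G_def by linarith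
        then have "\<bar>X\<bar> < sqrt D" using real_sqrt_abs[of X] real_sqrt_less_iff by metis
        then have "X < sqrt D" by simp
        then have "2 * (1 - a) * w < 2 * (1 - a) * u" using key unfolding X_def by simp
        then show ?thesis using True by simp
      next
        case a1: False
        have "4 * (1 - a) * g w > 0" using gw a1 False by (simp add: mult_neg_neg)
        then have "X\<^sup>2 > D" using g_quad[of w] unfolding X_def D_def G_def by linarith
        then have X1: "\<bar>X\<bar> > sqrt D" using real_sqrt_abs[of X] real_sqrt_less_iff by metis
        have "D > G\<^sup>2" unfolding D_def G_def Delta_g_def using d_neg a1 False
          by (simp add: mult_neg_neg)
        then have "sqrt D > sqrt (G\<^sup>2)" using real_sqrt_less_iff[of "G\<^sup>2" D] by blast
        then have "sqrt D > \<bar>G\<bar>" by simp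
        moreover have "(1 - a) * w > 0" using a1 False wn by (simp add: mult_neg_neg)
        ultimately have "X > - sqrt D" unfolding X_def by linarith
        then have "X > sqrt D" using X1 by linarith
        then have "2 * (1 - a) * w > 2 * (1 - a) * u" using key unfolding X_def by simp
        then show ?thesis using a1 False by (simp add: mult_less_cancel_left)
      qed
      have "b < (2 - a) * u" using wu a2 by (simp add: w_def field_simps)
      then show ?thesis by (simp add: algebra_simps)
    qed
    show ?thesis using gu un L w by (simp add: u_def)
  qed
qed

end

context params
begin

definition uu :: real where "uu = uval a b c d"

lemma g_alpha: "g y = y\<^sup>2 + (- (a * y + b)) * y + (- (a * y + b)) * k"
  unfolding g_def unfolding c_eq d_eq by (simp add: algebra_simps power2_eq_square)

lemma F_le_case:
  assumes F: "Fval a b c d \<le> 0"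
  shows "a < 2" and "uu = x0 - 4 * k / a" and "- uu \<ge> 2 * k"
proof -
  have "a * x0 * (a * x0 - 2 * k * (2 - a)) \<le> 0" using F F_eq by simp
  moreover have ax: "a * x0 > 0" using a_pos x0_pos by simp
  ultimately have h: "a * x0 \<le> 2 * k * (2 - a)" using a_pos x0_pos by (auto simp: mult_le_0_iff)
  then have "2 * k * (2 - a) > 0" using ax by linarith
  then show a2: "a < 2" using k_pos by (simp add: zero_less_mult_iff)
  show u: "uu = x0 - 4 * k / a" using F a2 by (simp add: uu_def uval_def xDm_eq)
  have "a * (4 * k / a - x0) \<ge> a * (2 * k)" using a_pos h by (simp add: algebra_simps)
  then have "4 * k / a - x0 \<ge> 2 * k" using a_pos by (simp add: mult_le_cancel_left)
  then show "- uu \<ge> 2 * k" unfolding u by simp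
qed

lemma u_E2_data: "uu < x0 \<and> (\<exists>r. r\<^sup>2 - (- (a * uu + b)) * r + (- (a * uu + b)) * k = 0 \<and> - uu \<ge> r)"
proof (cases "Fval a b c d \<le> 0")
  case True
  have u: "uu = x0 - 4 * k / a" and r: "- uu \<ge> 2 * k" using F_le_case[OF True] by auto
  have al: "- (a * uu + b) = 4 * k" unfolding u unfolding b_eq using a_pos by (simp add: algebra_simps)
  have "(2 * k)\<^sup>2 - (- (a * uu + b)) * (2 * k) + (- (a * uu + b)) * k = 0"
    unfolding al by (simp add: power2_eq_square)
  moreover have "uu < x0" unfolding u using k_pos a_pos by simp
  ultimately show ?thesis using r by blast
next
  case False
  then have G: "g uu = 0" "uu < 0" using gcase[of] by (auto simp: uu_def)
  have "(- uu)\<^sup>2 - (- (a * uu + b)) * (- uu) + (- (a * uu + b)) * k = 0"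
    using G(1) g_alpha[of uu] by (simp add: algebra_simps power2_eq_square)
  moreover have "uu < x0" using G(2) x0_pos by simp
  ultimately show ?thesis by blast
qed

lemma u_escape:
  assumes e: "\<epsilon> > 0"
  shows "\<exists>y n. uu < y \<and> y < uu + \<epsilon> \<and> (-1::real) ^ ((n + 1) div 2) * poly (S.U n) y \<le> 0"
proof (cases "Fval a b c d \<le> 0")
  case True
  have u: "uu = x0 - 4 * k / a" using F_le_case[OF True] by auto
  define \<delta> where "\<delta> = min \<epsilon> (4 * k / a) / 2"
  have d0: "\<delta> > 0" using e k_pos a_pos by (simp add: \<delta>_def)
  have "min \<epsilon> (4 * k / a) \<le> \<epsilon>" "min \<epsilon> (4 * k / a) \<le> 4 * k / a" "4 * k / a > 0" using k_pos a_pos by auto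
  have d1a: "\<delta> < \<epsilon>" using e k_pos a_pos unfolding \<delta>_def by (auto simp: min_def)
  have d1b: "\<delta> < 4 * k / a" using e k_pos a_pos unfolding \<delta>_def by (auto simp: min_def divide_strict_right_mono)
  note d1 = d1a d1b
  define y where "y = uu + \<delta>"
  define \<alpha> where "\<alpha> = - (a * y + b)"
  have al: "\<alpha> = 4 * k - a * \<delta>" unfolding \<alpha>_def y_def u unfolding b_eq using a_pos
    by (simp add: algebra_simps)
  have ad: "a * \<delta> < 4 * k" using d1(2) a_pos by (simp add: field_simps)
  have apos: "\<alpha> > 0" "\<alpha> < 4 * k" using al ad d0 a_pos by auto
  define c0 where "c0 = \<alpha> * (4 * k - \<alpha>) / 4"
  have c0: "c0 > 0" using apos by (simp add: c0_def)
  have Q: "\<rho>\<^sup>2 - \<alpha> * \<rho> + \<alpha> * k \<ge> c0" for \<rho>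
  proof -
    have "\<rho>\<^sup>2 - \<alpha> * \<rho> + \<alpha> * k - c0 = (\<rho> - \<alpha> / 2)\<^sup>2"
      by (simp add: c0_def power2_eq_square field_simps)
    then show ?thesis by (metis diff_ge_0_iff_ge zero_le_power2)
  qed
  obtain n where "(-1::real) ^ ((n + 1) div 2) * poly (S.U n) y \<le> 0"
    using S.escape_setting[of y c0] apos(1) c0 Q unfolding \<alpha>_def by blast
  moreover have "uu < y" "y < uu + \<epsilon>" using d0 d1 by (auto simp: y_def)
  ultimately show ?thesis by blast
next
  case False
  then have F: "Fval a b c d > 0" by simp
  have G: "g uu = 0" "uu < 0" "(a - 2) * uu + b < 0" "2 * (1 - a) * uu - (b + c) > 0"
    using gcase[OF F] by (auto simp: uu_def)
  define \<eta> where "\<eta> = - ((a - 2) * uu + b) / (\<bar>a - 2\<bar> + 1)"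
  have eta: "\<eta> > 0" using G(3) by (simp add: \<eta>_def)
  define \<delta> where "\<delta> = min (min \<epsilon> (- uu)) \<eta> / 2"
  have d0: "\<delta> > 0" using e G(2) eta by (simp add: \<delta>_def)
  have d1: "\<delta> < \<epsilon>" "\<delta> \<le> - uu / 2" "\<delta> < \<eta>" using e G(2) eta by (auto simp: \<delta>_def)
  define y where "y = uu + \<delta>"
  have y0: "y \<le> 0" "uu < y" using d1 d0 by (auto simp: y_def)
  have yw: "(a - 2) * y + b < 0"
  proof -
    have "(a - 2) * \<delta> \<le> \<bar>a - 2\<bar> * \<delta>" using d0 by (simp add: mult_right_mono)
    also have "\<dots> \<le> \<bar>a - 2\<bar> * \<eta>" using d1(3) by (simp add: mult_left_mono)
    also have "\<dots> < (\<bar>a - 2\<bar> + 1) * \<eta>" using eta by (simp add: algebra_simps)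
    also have "\<dots> = - ((a - 2) * uu + b)" unfolding \<eta>_def by (simp add: add_pos_nonneg)
    finally show ?thesis unfolding y_def by (simp add: algebra_simps)
  qed
  define \<alpha> where "\<alpha> = - (a * y + b)"
  have apos: "\<alpha> > 0"
  proof -
    have "\<alpha> = a * (x0 - y)" unfolding \<alpha>_def b_eq by (simp add: algebra_simps)
    then show ?thesis using a_pos y0 x0_pos by simp
  qed
  have gy: "g y > 0"
  proof -
    define L where "L z = (1 - a) * (z + uu) - (b + c)" for z
    have gy: "g y = (y - uu) * L y" using G(1) unfolding g_def L_def
      by (simp add: algebra_simps power2_eq_square)
    have L0: "L 0 > 0"
    proof -
      have "uu * L 0 = d" using G(1) unfolding g_def L_def by (simp add: algebra_simps power2_eq_square)
      then have "uu * L 0 < 0" using d_neg by simp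
      then show ?thesis using G(2) by (simp add: mult_less_0_iff)
    qed
    have Lu: "L uu > 0" using G(4) unfolding L_def by (simp add: algebra_simps)
    have "L y > 0"
    proof (cases "1 - a \<ge> 0")
      case True
      have "(1 - a) * (uu + uu) \<le> (1 - a) * (y + uu)" using True y0 by (intro mult_left_mono) auto
      then show ?thesis using Lu unfolding L_def by simp
    next
      case False
      have "(1 - a) * (0 + uu) \<le> (1 - a) * (y + uu)" using False y0 by (intro mult_left_mono_neg) auto
      then show ?thesis using L0 unfolding L_def by simp
    qed
    then show ?thesis unfolding gy using y0 by simp
  qed
  have Q: "\<rho>\<^sup>2 - \<alpha> * \<rho> + \<alpha> * k \<ge> g y" if "k < \<rho>" "\<rho> \<le> - y" for \<rho>
  proof -
    have "\<rho>\<^sup>2 - \<alpha> * \<rho> + \<alpha> * k - g y = (\<rho> + y) * (\<rho> - y - \<alpha>)"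
      unfolding g_alpha \<alpha>_def by (simp add: algebra_simps power2_eq_square)
    moreover have "\<rho> + y \<le> 0" using that by simp
    moreover have "\<rho> - y - \<alpha> < 0" using that yw unfolding \<alpha>_def by (simp add: algebra_simps)
    ultimately have "\<rho>\<^sup>2 - \<alpha> * \<rho> + \<alpha> * k - g y \<ge> 0" by (simp add: mult_nonpos_nonpos)
    then show ?thesis by simp
  qed
  obtain n where "(-1::real) ^ ((n + 1) div 2) * poly (S.U n) y \<le> 0"
    using S.escape_setting[of y "g y"] apos gy Q unfolding \<alpha>_def by blast
  moreover have "y < uu + \<epsilon>" using d1 by (simp add: y_def)
  ultimately show ?thesis using y0 by blast
qed

sublocale Z: zsetting a b k uu
proof unfold_locales
  show "uu < S.x0" using u_E2_data Sx0 by simp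
  fix n
  obtain r where r: "r\<^sup>2 - (- (a * uu + b)) * r + (- (a * uu + b)) * k = 0" "- uu \<ge> r"
    using u_E2_data by blast
  show "(-1::real) ^ ((n + 1) div 2) * poly (S.U n) uu > 0"
    using S.E2_setting[of uu r n] r u_E2_data Sx0 by simp
qed

end

context params
begin

lemma W_eq: "Wpoly a b c d n = Apoly a b ^ (n div 2) * S.Uc n"
proof -
  define A where "A = Apoly a b"
  have B: "[:complex_of_real d, complex_of_real c:] = smult (of_real k) A"
    unfolding A_def Apoly_def c_eq d_eq by (simp add: algebra_simps)
  have A': "[:complex_of_real b, complex_of_real a:] = A" by (simp add: A_def Apoly_def)
  have "Wpoly a b c d n = A ^ (n div 2) * S.Uc n \<and> Wpoly a b c d (Suc n) = A ^ (Suc n div 2) * S.Uc (Suc n)"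
  proof (induction n)
    case 0 then show ?case by simp
  next
    case (Suc n)
    have IH1: "Wpoly a b c d n = A ^ (n div 2) * S.Uc n"
      and IH2: "Wpoly a b c d (Suc n) = A ^ (Suc n div 2) * S.Uc (Suc n)" using Suc.IH by blast+
    have W: "Wpoly a b c d (Suc (Suc n)) = A * Wpoly a b c d (Suc n) + smult (of_real k) A * Wpoly a b c d n"
      by (simp add: A' B)
    have "Wpoly a b c d (Suc (Suc n)) = A ^ (Suc (Suc n) div 2) * S.Uc (Suc (Suc n))"
    proof (cases "even n")
      case True
      define m where "m = n div 2"
      have m: "n = 2 * m" using True unfolding m_def by simp
      have "Wpoly a b c d (Suc (Suc n)) = A * (A ^ m * S.Uc (Suc n)) + smult (of_real k) A * (A ^ m * S.Uc n)"
        unfolding W IH1 IH2 using m by simp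
      also have "\<dots> = A ^ Suc m * (S.Uc (Suc n) + smult (of_real k) (S.Uc n))"
        by (simp add: algebra_simps)
      also have "\<dots> = A ^ (Suc (Suc n) div 2) * S.Uc (Suc (Suc n))"
        using m True by simp
      finally show ?thesis .
    next
      case False
      define m where "m = n div 2"
      have m: "n = Suc (2 * m)" using False unfolding m_def by presburger
      have "Wpoly a b c d (Suc (Suc n)) = A * (A ^ Suc m * S.Uc (Suc n)) + smult (of_real k) A * (A ^ m * S.Uc n)"
        unfolding W IH1 IH2 using m by simp
      also have "\<dots> = A ^ Suc m * (A * S.Uc (Suc n) + smult (of_real k) (S.Uc n))"
        by (simp add: algebra_simps)
      also have "\<dots> = A ^ (Suc (Suc n) div 2) * S.Uc (Suc (Suc n))"
        using m False by (simp add: A_def Apoly_def)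
      finally show ?thesis .
    qed
    then show ?case using IH2 by simp
  qed
  then show ?thesis by (simp add: A_def)
qed

lemma U_eq: "Upoly a b c d n = S.Uc n"
proof -
  have "Apoly a b \<noteq> 0" using a_pos by (simp add: Apoly_def)
  then show ?thesis unfolding Upoly_def W_eq by simp
qed

end

theorem theorem3p6:
  fixes a b c d :: real
  assumes "a > 0" and "c > 0" and "b < 0" and "d < 0"
    and "xA a b = xB c d"
  shows "(\<forall>n. Apoly a b ^ (n div 2) dvd Wpoly a b c d n
            \<and> degree (Upoly a b c d n) = (n + 1) div 2
            \<and> (\<forall>z. poly (Upoly a b c d n) z = 0 \<longrightarrow>
                  z \<in> \<real> \<and> uval a b c d < Re z \<and> Re z < xB c d))
         \<and> limit_of_zeros (Upoly a b c d) (complex_of_real (uval a b c d))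
         \<and> limit_of_zeros (Upoly a b c d) (complex_of_real (xB c d))"
proof -
  define k where "k = c / a"
  define x0 where "x0 = - b / a"
  have kp: "k > 0" using assms by (simp add: k_def)
  have xp: "x0 > 0" using assms divide_pos_pos[of "-b" a] by (simp add: x0_def)
  have be: "b = - a * x0" using assms by (simp add: x0_def)
  have ce: "c = a * k" using assms by (simp add: k_def)
  have de: "d = b * k"
  proof -
    have "b / a = d / c" using assms(5) by (simp add: xA_def xB_def)
    then show ?thesis using assms by (simp add: k_def field_simps)
  qed
  interpret P: params a b c d k x0 using assms kp xp be ce de by unfold_locales auto
  have uu: "P.uu = uval a b c d" by (simp add: P.uu_def)
  have xb: "xB c d = x0" using P.x0_eq by simp
  have part1: "Apoly a b ^ (n div 2) dvd Wpoly a b c d n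
            \<and> degree (Upoly a b c d n) = (n + 1) div 2
            \<and> (\<forall>z. poly (Upoly a b c d n) z = 0 \<longrightarrow>
                  z \<in> \<real> \<and> uval a b c d < Re z \<and> Re z < xB c d)" for n
  proof (intro conjI allI impI)
    show "Apoly a b ^ (n div 2) dvd Wpoly a b c d n" unfolding P.W_eq by simp
    show "degree (Upoly a b c d n) = (n + 1) div 2" unfolding P.U_eq using P.Z.degree_Uc_eq .
    fix z assume "poly (Upoly a b c d n) z = 0"
    then obtain x where x: "z = of_real x" "poly (P.S.U n) x = 0" using P.Z.Uc_roots unfolding P.U_eq by blast
    have r: "P.uu < x \<and> x < P.S.x0" using P.Z.U_roots_range[OF x(2)] .
    show "z \<in> \<real>" using x by simp
    show "uval a b c d < Re z" using r x uu by simp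
    show "Re z < xB c d" using r x xb P.Sx0 by simp
  qed
  have conv: "limit_of_zeros (Upoly a b c d) (complex_of_real w)"
    if ex: "\<exists>z. (\<forall>n\<ge>1. poly (P.S.U n) (z n) = 0) \<and> z \<longlonglongrightarrow> w" for w
  proof -
    obtain z where z: "\<forall>n\<ge>1. poly (P.S.U n) (z n) = 0" "z \<longlonglongrightarrow> w" using ex by blast
    show ?thesis unfolding limit_of_zeros_def P.U_eq
    proof (intro exI conjI allI impI)
      fix n :: nat assume "n \<ge> 1"
      then show "poly (P.S.Uc n) (complex_of_real (z n)) = 0" using z(1) P.S.poly_Uc_real by simp
    next
      show "(\<lambda>n. complex_of_real (z n)) \<longlonglongrightarrow> complex_of_real w" using z(2) by (rule tendsto_of_real)
    qed
  qed
  have l1: "limit_of_zeros (Upoly a b c d) (complex_of_real (uval a b c d))"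
    using conv[OF P.Z.lim_u[OF P.u_escape]] uu by simp
  have l2: "limit_of_zeros (Upoly a b c d) (complex_of_real (xB c d))"
    using conv[OF P.Z.lim_x0] xb P.Sx0 by simp
  show ?thesis using part1 l1 l2 by blast
qed

end
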